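(* Define $G(k,T)=v(k,T)-\min_{a\in\{0,1,\dots,k\}}[v(k-a,T)+F(a)]$. Then for every $T\ge0$, the map $k\mapsto G(k,T)$ is non-decreasing.
   Context: Let $\lambda>0$ and let $N$ be a Poisson process with intensity $\lambda$, arrival times $0<\sigma_1<\sigma_2<\cdots$, and natural filtration $\mathcal F_t=\sigma(N_s:s\le t)$. Let $F:[0,\infty)\to[0,\infty)$ be strictly increasing and strictly convex with $F(0)=0$. For $k\in\{0,1,\dots\}$ let $\mathcal A_k$ be the set of $(\mathcal F_t)$-adapted, integer-valued, nonnegative, non-increasing processes $\xi$ with $\xi_0=k$ whose values change only at arrival times of $N$, and $v(k,T)=\inf_{\xi\in\mathcal A_k}\mathbb E[\sum_{i:\sigma_i\le T}F(\xi_{\sigma_i-}-\xi_{\sigma_i})+F(\xi_T)]$ (so $v(0,T)=0$). *)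

theory Defs
  imports "HOL-Probability.Probability"
begin

definition strictly_convex_on :: "real set \<Rightarrow> (real \<Rightarrow> real) \<Rightarrow> bool" where
  "strictly_convex_on S f \<longleftrightarrow> (\<forall>x\<in>S. \<forall>y\<in>S. x \<noteq> y \<longrightarrow> (\<forall>u::real. 0 < u \<and> u < 1 \<longrightarrow>
      f (u * x + (1 - u) * y) < u * f x + (1 - u) * f y))"

text \<open>A Poisson process of intensity lam on the probability space M, given through its
  interarrival times tau 0, tau 1, ...: they are independent and exponentially
  distributed with rate lam.\<close>
definition poisson_interarrivals :: "'w measure \<Rightarrow> real \<Rightarrow> (nat \<Rightarrow> 'w \<Rightarrow> real) \<Rightarrow> bool" where
  "poisson_interarrivals M lam tau \<longleftrightarrow>
     prob_space M \<and> 0 < lam \<and>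
     prob_space.indep_vars M (\<lambda>_. borel) tau UNIV \<and>
     (\<forall>i. distributed M lborel (tau i) (exponential_density lam))"

definition arrival :: "(nat \<Rightarrow> 'w \<Rightarrow> real) \<Rightarrow> nat \<Rightarrow> 'w \<Rightarrow> real" where
  "arrival tau i w = (\<Sum>j<i. tau j w)"

definition counting :: "(nat \<Rightarrow> 'w \<Rightarrow> real) \<Rightarrow> real \<Rightarrow> 'w \<Rightarrow> nat" where
  "counting tau t w = card {i. 1 \<le> i \<and> arrival tau i w \<le> t}"

definition nat_filtration :: "'w measure \<Rightarrow> (nat \<Rightarrow> 'w \<Rightarrow> real) \<Rightarrow> real \<Rightarrow> 'w measure" where
  "nat_filtration M tau t = sigma (space M)
     (\<Union>s\<in>{0..t}. {counting tau s -` A \<inter> space M | A. True})"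

text \<open>Admissible strategies A_k: adapted, nat-valued (so integer and nonnegative),
  non-increasing, starting at k, and changing only at arrival times.\<close>
definition admissible :: "'w measure \<Rightarrow> (nat \<Rightarrow> 'w \<Rightarrow> real) \<Rightarrow> nat \<Rightarrow> (real \<Rightarrow> 'w \<Rightarrow> nat) set" where
  "admissible M tau k = {\<xi>.
     (\<forall>t\<ge>0. \<xi> t \<in> measurable (nat_filtration M tau t) (count_space UNIV)) \<and>
     (\<forall>w\<in>space M. \<xi> 0 w = k) \<and>
     (\<forall>w\<in>space M. \<forall>s t. 0 \<le> s \<and> s \<le> t \<longrightarrow> \<xi> t w \<le> \<xi> s w) \<and>
     (\<forall>w\<in>space M. \<forall>s t. 0 \<le> s \<and> s \<le> t \<and>
        (\<forall>i\<ge>1. \<not> (s < arrival tau i w \<and> arrival tau i w \<le> t)) \<longrightarrow> \<xi> s w = \<xi> t w)}"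

definition left_lim :: "(real \<Rightarrow> nat) \<Rightarrow> real \<Rightarrow> real" where
  "left_lim f t = Lim (at_left t) (\<lambda>s. real (f s))"

definition cost :: "'w measure \<Rightarrow> (nat \<Rightarrow> 'w \<Rightarrow> real) \<Rightarrow> (real \<Rightarrow> real) \<Rightarrow> real \<Rightarrow> (real \<Rightarrow> 'w \<Rightarrow> nat) \<Rightarrow> ennreal" where
  "cost M tau F T \<xi> = (\<integral>\<^sup>+ w.
      (\<Sum>i. if 1 \<le> i \<and> arrival tau i w \<le> T
             then ennreal (F (left_lim (\<lambda>t. \<xi> t w) (arrival tau i w) - real (\<xi> (arrival tau i w) w)))
             else 0)
      + ennreal (F (real (\<xi> T w))) \<partial>M)"

text \<open>Value function v(k,T) (finite since the strategy xi = k costs F(k)).\<close>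
definition value_fn :: "'w measure \<Rightarrow> (nat \<Rightarrow> 'w \<Rightarrow> real) \<Rightarrow> (real \<Rightarrow> real) \<Rightarrow> nat \<Rightarrow> real \<Rightarrow> real" where
  "value_fn M tau F k T = enn2real (INF \<xi>\<in>admissible M tau k. cost M tau F T \<xi>)"

definition G_fn :: "'w measure \<Rightarrow> (nat \<Rightarrow> 'w \<Rightarrow> real) \<Rightarrow> (real \<Rightarrow> real) \<Rightarrow> nat \<Rightarrow> real \<Rightarrow> real" where
  "G_fn M tau F k T = value_fn M tau F k T
     - Min ((\<lambda>a. value_fn M tau F (k - a) T + F (real a)) ` {0..k})"

end

theory Submission
  imports Defs
begin



lemma conv_le:
  assumes cv: "strictly_convex_on {0..} F" and x: "0 \<le> x" and y: "0 \<le> y" and u: "0 \<le> u" "u \<le> 1"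
  shows "F (u * x + (1 - u) * y) \<le> u * F x + (1 - u) * F y"
proof (cases "u = 0 \<or> u = 1 \<or> x = y")
  case True
  then show ?thesis by (auto simp: algebra_simps)
next
  case False
  then have "0 < u" "u < 1" "x \<noteq> y" using u by auto
  then show ?thesis using cv x y unfolding strictly_convex_on_def by (auto intro: less_imp_le)
qed

lemma conv_swap:
  assumes cv: "strictly_convex_on {0..} F" and p: "0 \<le> p" "p \<le> r" "r \<le> q"
  shows "F r + F (p + q - r) \<le> F p + F q"
proof (cases "p = q")
  case True then show ?thesis using p by auto
next
  case False
  then have pq: "p < q" using p by auto
  define u where "u = (q - r) / (q - p)"
  have u: "0 \<le> u" "u \<le> 1" using pq p by (auto simp: u_def field_simps)
  have uq: "u * (q - p) = q - r" using pq by (simp add: u_def)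
  have r: "r = u * p + (1 - u) * q" using uq by (simp add: algebra_simps)
  have s: "p + q - r = (1 - u) * p + (1 - (1 - u)) * q" using r by (simp add: algebra_simps)
  have "F r \<le> u * F p + (1 - u) * F q" using conv_le[OF cv _ _ u, of p q] p r by auto
  moreover have "F (p + q - r) \<le> (1 - u) * F p + (1 - (1 - u)) * F q"
    unfolding s using conv_le[OF cv, of p q "1 - u"] p u by auto
  ultimately show ?thesis by (simp add: algebra_simps)
qed

lemma jump_ineq:
  assumes cv: "strictly_convex_on {0..} F" and "x1 \<le> x0" "y1 \<le> y0"
  shows "F (min x0 y0 - min x1 y1) + F (max x0 y0 - max x1 y1) \<le> F (x0 - x1) + F (y0 - y1)"
proof -
  consider "x0 \<ge> y0" "x1 \<ge> y1" | "x0 \<ge> y0" "x1 < y1" | "x0 < y0" "x1 \<ge> y1" | "x0 < y0" "x1 < y1" by linarith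
  then show ?thesis
  proof cases
    case 1 then show ?thesis by (simp add: min_def max_def add.commute)
  next
    case 2
    have "F (y0 - x1) + F ((y0 - y1) + (x0 - x1) - (y0 - x1)) \<le> F (y0 - y1) + F (x0 - x1)"
      using 2 assms by (intro conv_swap[OF cv]) auto
    moreover have "(y0 - y1) + (x0 - x1) - (y0 - x1) = x0 - y1" by simp
    ultimately show ?thesis using 2 by (simp add: min_def max_def add.commute)
  next
    case 3
    have "F (x0 - y1) + F ((x0 - x1) + (y0 - y1) - (x0 - y1)) \<le> F (x0 - x1) + F (y0 - y1)"
      using 3 assms by (intro conv_swap[OF cv]) auto
    moreover have "(x0 - x1) + (y0 - y1) - (x0 - y1) = y0 - x1" by simp
    ultimately show ?thesis using 3 by (simp add: min_def max_def add.commute)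
  next
    case 4 then show ?thesis by (simp add: min_def max_def)
  qed
qed

lemma term_ineq:
  assumes cv: "strictly_convex_on {0..} F" and "0 \<le> x" "0 \<le> a" "a \<le> y"
  shows "F (min x y) + F (max x y - a) \<le> F x + F (y - a)"
proof (cases "x \<le> y")
  case True then show ?thesis by (simp add: add.commute)
next
  case False
  have "F y + F ((y - a) + x - y) \<le> F (y - a) + F x"
    using False assms by (intro conv_swap[OF cv]) auto
  then show ?thesis using False by (simp add: add.commute)
qed




lemma tau_meas:
  assumes pi: "poisson_interarrivals M lam tau"
  shows "tau j \<in> borel_measurable M"
proof -
  have "distributed M lborel (tau j) (exponential_density lam)" using pi unfolding poisson_interarrivals_def by auto
  then have "tau j \<in> measurable M lborel" by (rule distributed_measurable)
  then show ?thesis by simp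
qed

lemma arrival_meas:
  assumes pi: "poisson_interarrivals M lam tau"
  shows "arrival tau i \<in> borel_measurable M"
proof -
  have "(\<lambda>w. \<Sum>j<i. tau j w) \<in> borel_measurable M" using tau_meas[OF pi] by auto
  then show ?thesis unfolding arrival_def[abs_def] by simp
qed

lemma counting_meas:
  assumes pi: "poisson_interarrivals M lam tau"
  shows "counting tau s \<in> measurable M (count_space UNIV)"
proof -
  note [measurable] = arrival_meas[OF pi]
  define P where "P i w \<longleftrightarrow> 1 \<le> i \<and> arrival tau i w \<le> s" for i w
  have Pm: "{w \<in> space M. P i w} \<in> sets M" for i unfolding P_def by measurable
  have Pm2: "{w \<in> space M. \<not> P i w} \<in> sets M" for i unfolding P_def by measurable
  have eqI: "{w \<in> space M. \<forall>i. P i w \<longleftrightarrow> i \<in> I} \<in> sets M" for I :: "nat set"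
  proof -
    have "{w \<in> space M. \<forall>i. P i w \<longleftrightarrow> i \<in> I} = space M \<inter> (\<Inter>i. if i \<in> I then {w \<in> space M. P i w} else {w \<in> space M. \<not> P i w})"
      by auto
    also have "\<dots> \<in> sets M" using Pm Pm2 by (intro sets.Int sets.countable_INT') auto
    finally show ?thesis .
  qed
  have infm: "{w \<in> space M. infinite {i. P i w}} \<in> sets M"
  proof -
    have "{w \<in> space M. infinite {i. P i w}} = space M \<inter> (\<Inter>N. \<Union>i\<in>{N..}. {w \<in> space M. P i w})"
      by (auto simp: infinite_nat_iff_unbounded_le)
    also have "\<dots> \<in> sets M" using Pm by (intro sets.Int sets.countable_INT' sets.countable_UN') auto
    finally show ?thesis .
  qed
  show ?thesis
    unfolding measurable_count_space_eq2_countable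
  proof safe
    fix n :: nat
    have "counting tau s -` {n} \<inter> space M =
      (\<Union>I\<in>{I. finite I \<and> card I = n}. {w \<in> space M. \<forall>i. P i w \<longleftrightarrow> i \<in> I})
      \<union> (if n = 0 then {w \<in> space M. infinite {i. P i w}} else {})"
    proof (intro set_eqI iffI)
      fix w assume w: "w \<in> counting tau s -` {n} \<inter> space M"
      then have c: "card {i. P i w} = n" by (simp add: counting_def P_def)
      show "w \<in> (\<Union>I\<in>{I. finite I \<and> card I = n}. {w \<in> space M. \<forall>i. P i w \<longleftrightarrow> i \<in> I})
      \<union> (if n = 0 then {w \<in> space M. infinite {i. P i w}} else {})"
      proof (cases "finite {i. P i w}")
        case True then show ?thesis using w c by auto
      next
        case False then have "n = 0" using c by simp
        then show ?thesis using w False by auto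
      qed
    next
      fix w assume "w \<in> (\<Union>I\<in>{I. finite I \<and> card I = n}. {w \<in> space M. \<forall>i. P i w \<longleftrightarrow> i \<in> I})
      \<union> (if n = 0 then {w \<in> space M. infinite {i. P i w}} else {})"
      then show "w \<in> counting tau s -` {n} \<inter> space M"
      proof
        assume "w \<in> (\<Union>I\<in>{I. finite I \<and> card I = n}. {w \<in> space M. \<forall>i. P i w \<longleftrightarrow> i \<in> I})"
        then obtain I where "finite I" "card I = n" "w \<in> space M" "\<forall>i. P i w \<longleftrightarrow> i \<in> I" by auto
        moreover then have "{i. P i w} = I" by auto
        ultimately show ?thesis by (simp add: counting_def P_def[abs_def])
      next
        assume "w \<in> (if n = 0 then {w \<in> space M. infinite {i. P i w}} else {})"
        then show ?thesis by (auto split: if_splits simp: counting_def P_def[abs_def])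
      qed
    qed
    also have "\<dots> \<in> sets M"
      using eqI infm by (intro sets.Un sets.countable_UN' countable_subset[OF _ countable_Collect_finite[where 'a=nat]]) auto
    finally show "counting tau s -` {n} \<inter> space M \<in> sets M" .
  qed auto
qed

lemma filt_meas:
  assumes pi: "poisson_interarrivals M lam tau"
    and f: "f \<in> measurable (nat_filtration M tau t) N"
  shows "f \<in> measurable M N"
proof (rule measurable_from_subalg[OF _ f])
  let ?A = "(\<Union>s\<in>{0..t}. {counting tau s -` A \<inter> space M | A. True})"
  have A: "?A \<subseteq> sets M"
    using measurable_sets[OF counting_meas[OF pi]] by auto
  then have A2: "?A \<subseteq> Pow (space M)" using sets.sets_into_space by blast
  show "subalgebra M (nat_filtration M tau t)"
    unfolding subalgebra_def nat_filtration_def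
    using A A2 by (simp add: sets.sigma_sets_subset)
qed




definition pathok :: "(nat \<Rightarrow> 'w \<Rightarrow> real) \<Rightarrow> nat \<Rightarrow> (real \<Rightarrow> 'w \<Rightarrow> nat) \<Rightarrow> 'w \<Rightarrow> bool" where
  "pathok tau k \<xi> w \<longleftrightarrow> \<xi> 0 w = k \<and>
     (\<forall>s t. 0 \<le> s \<and> s \<le> t \<longrightarrow> \<xi> t w \<le> \<xi> s w) \<and>
     (\<forall>s t. 0 \<le> s \<and> s \<le> t \<and>
        (\<forall>i\<ge>1. \<not> (s < arrival tau i w \<and> arrival tau i w \<le> t)) \<longrightarrow> \<xi> s w = \<xi> t w)"

lemma adm_pathok: "\<xi> \<in> admissible M tau k \<Longrightarrow> w \<in> space M \<Longrightarrow> pathok tau k \<xi> w"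
  unfolding admissible_def pathok_def by auto

lemma adm_meas: "\<xi> \<in> admissible M tau k \<Longrightarrow> 0 \<le> t \<Longrightarrow> \<xi> t \<in> measurable (nat_filtration M tau t) (count_space UNIV)"
  unfolding admissible_def by auto

lemma arr_Suc: "arrival tau (Suc i) w = arrival tau i w + tau i w"
  by (simp add: arrival_def)

lemma arr_0[simp]: "arrival tau 0 w = 0"
  by (simp add: arrival_def)

lemma arr_strict: "\<forall>j. 0 < tau j w \<Longrightarrow> strict_mono (\<lambda>i. arrival tau i w)"
  by (rule strict_monoI_Suc) (simp add: arr_Suc)

lemma arr_nonneg: "\<forall>j. 0 < tau j w \<Longrightarrow> 0 \<le> arrival tau i w"
  unfolding arrival_def by (intro sum_nonneg) (auto intro: less_imp_le)

lemma arr_mono: "\<forall>j. 0 < tau j w \<Longrightarrow> i \<le> j \<Longrightarrow> arrival tau i w \<le> arrival tau j w"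
  using arr_strict[of tau w] strict_mono_less_eq[of "\<lambda>i. arrival tau i w"] by auto

lemma arr_less: "\<forall>j. 0 < tau j w \<Longrightarrow> i < j \<Longrightarrow> arrival tau i w < arrival tau j w"
  using arr_strict[of tau w] strict_mono_less[of "\<lambda>i. arrival tau i w"] by auto

lemma const_seg:
  assumes p: "pathok tau k \<xi> w" and g: "\<forall>j. 0 < tau j w"
    and q: "arrival tau i w \<le> q" "q < arrival tau (Suc i) w"
  shows "\<xi> q w = \<xi> (arrival tau i w) w"
proof -
  have "\<forall>j\<ge>1. \<not> (arrival tau i w < arrival tau j w \<and> arrival tau j w \<le> q)"
  proof (intro allI impI notI)
    fix j assume "1 \<le> j" "arrival tau i w < arrival tau j w \<and> arrival tau j w \<le> q"
    then show False
      using g arr_mono[of tau w j i] arr_mono[of tau w "Suc i" j] q by (cases "j \<le> i") auto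
  qed
  then show ?thesis using p q g arr_nonneg[of tau w i] unfolding pathok_def by (metis)
qed

lemma left_lim_arr:
  assumes p: "pathok tau k \<xi> w" and g: "\<forall>j. 0 < tau j w"
  shows "left_lim (\<lambda>t. \<xi> t w) (arrival tau (Suc m) w) = real (\<xi> (arrival tau m w) w)"
proof -
  have lt: "arrival tau m w < arrival tau (Suc m) w" using g arr_less[of tau w m "Suc m"] by simp
  have "eventually (\<lambda>s. s \<in> {arrival tau m w<..<arrival tau (Suc m) w}) (at_left (arrival tau (Suc m) w))"
    by (rule eventually_at_left_real[OF lt])
  then have "eventually (\<lambda>s. real (\<xi> s w) = real (\<xi> (arrival tau m w) w)) (at_left (arrival tau (Suc m) w))"
    by eventually_elim (use const_seg[OF p g] in auto)
  then have "((\<lambda>s. real (\<xi> s w)) \<longlongrightarrow> real (\<xi> (arrival tau m w) w)) (at_left (arrival tau (Suc m) w))"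
    by (rule tendsto_eventually)
  then show ?thesis unfolding left_lim_def by (intro tendsto_Lim) auto
qed




definition Xv :: "(nat \<Rightarrow> 'w \<Rightarrow> real) \<Rightarrow> (real \<Rightarrow> 'w \<Rightarrow> nat) \<Rightarrow> nat \<Rightarrow> 'w \<Rightarrow> nat" where
  "Xv tau \<xi> i w = (if \<forall>j. 0 < tau j w then \<xi> (arrival tau i w) w else 0)"

definition Cn :: "(nat \<Rightarrow> 'w \<Rightarrow> real) \<Rightarrow> (real \<Rightarrow> real) \<Rightarrow> real \<Rightarrow> (real \<Rightarrow> 'w \<Rightarrow> nat) \<Rightarrow> 'w \<Rightarrow> ennreal" where
  "Cn tau F T \<xi> w = (\<Sum>i. if 1 \<le> i \<and> arrival tau i w \<le> T
      then ennreal (F (real (Xv tau \<xi> (i - 1) w) - real (Xv tau \<xi> i w))) else 0)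
      + ennreal (F (real (\<xi> T w)))"

lemma meas_nat2:
  fixes h :: "nat \<Rightarrow> nat \<Rightarrow> 'b"
  assumes f: "f \<in> measurable M (count_space UNIV)" and g: "g \<in> measurable M (count_space UNIV)"
    and h: "\<And>a b. h a b \<in> space N"
  shows "(\<lambda>w. h (f w) (g w)) \<in> measurable M N"
proof -
  have "(\<lambda>w. (\<lambda>a w. h a (g w)) (f w) w) \<in> measurable M N"
  proof (rule measurable_compose_countable[OF _ f])
    fix a :: nat
    show "(\<lambda>w. h a (g w)) \<in> measurable M N"
      using measurable_compose_countable[OF _ g, of "\<lambda>b w. h a b" N] h by auto
  qed
  then show ?thesis by simp
qed

lemma good_meas:
  assumes pi: "poisson_interarrivals M lam tau"
  shows "{w \<in> space M. \<forall>j. 0 < tau j w} \<in> sets M"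
proof -
  note [measurable] = tau_meas[OF pi]
  show ?thesis by measurable
qed

lemma Xv_meas:
  assumes pi: "poisson_interarrivals M lam tau"
    and p: "\<forall>w\<in>space M. pathok tau k \<xi> w"
    and m: "\<And>q. 0 \<le> q \<Longrightarrow> \<xi> q \<in> measurable M (count_space UNIV)"
  shows "Xv tau \<xi> i \<in> measurable M (count_space UNIV)"
  unfolding measurable_count_space_eq2_countable
proof safe
  note [measurable] = arrival_meas[OF pi]
  fix n :: nat
  let ?G = "{w \<in> space M. \<forall>j. 0 < tau j w}"
  have "Xv tau \<xi> i -` {n} \<inter> space M =
     (?G \<inter> (\<Union>q\<in>\<rat> \<inter> {0..}. {w\<in>space M. arrival tau i w \<le> q \<and> q < arrival tau (Suc i) w} \<inter> (\<xi> q -` {n} \<inter> space M)))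
     \<union> (if n = 0 then space M - ?G else {})"
  proof (intro set_eqI iffI)
    fix w assume w: "w \<in> Xv tau \<xi> i -` {n} \<inter> space M"
    show "w \<in> (?G \<inter> (\<Union>q\<in>\<rat> \<inter> {0..}. {w\<in>space M. arrival tau i w \<le> q \<and> q < arrival tau (Suc i) w} \<inter> (\<xi> q -` {n} \<inter> space M)))
     \<union> (if n = 0 then space M - ?G else {})"
    proof (cases "\<forall>j. 0 < tau j w")
      case g: True
      have lt: "arrival tau i w < arrival tau (Suc i) w" using g arr_less[of tau w i "Suc i"] by simp
      obtain r where r: "r \<in> \<rat>" "arrival tau i w < r" "r < arrival tau (Suc i) w"
        using Rats_dense_in_real[OF lt] by blast
      have r0: "0 \<le> r" using r(2) g arr_nonneg[of tau w i] by simp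
      have "\<xi> r w = \<xi> (arrival tau i w) w" using const_seg[of tau k \<xi> w i r] p w g r by auto
      then have "\<xi> r w = n" using w g by (simp add: Xv_def)
      then have "w \<in> ?G \<inter> ({w\<in>space M. arrival tau i w \<le> r \<and> r < arrival tau (Suc i) w} \<inter> (\<xi> r -` {n} \<inter> space M))"
        using w g r by auto
      then show ?thesis using r r0 by blast
    next
      case False
      then have "n = 0" "w \<in> space M" using w by (auto simp: Xv_def)
      then show ?thesis using False by auto
    qed
  next
    fix w assume w: "w \<in> (?G \<inter> (\<Union>q\<in>\<rat> \<inter> {0..}. {w\<in>space M. arrival tau i w \<le> q \<and> q < arrival tau (Suc i) w} \<inter> (\<xi> q -` {n} \<inter> space M)))
     \<union> (if n = 0 then space M - ?G else {})"
    then show "w \<in> Xv tau \<xi> i -` {n} \<inter> space M"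
    proof
      assume "w \<in> (?G \<inter> (\<Union>q\<in>\<rat> \<inter> {0..}. {w\<in>space M. arrival tau i w \<le> q \<and> q < arrival tau (Suc i) w} \<inter> (\<xi> q -` {n} \<inter> space M)))"
      then obtain q where q: "w \<in> space M" "\<forall>j. 0 < tau j w" "arrival tau i w \<le> q" "q < arrival tau (Suc i) w" "\<xi> q w = n"
        by auto
      then have "\<xi> q w = \<xi> (arrival tau i w) w" using const_seg[of tau k \<xi> w i q] p by auto
      then show ?thesis using q by (simp add: Xv_def)
    next
      assume "w \<in> (if n = 0 then space M - ?G else {})"
      then show ?thesis by (auto simp: Xv_def split: if_splits)
    qed
  qed
  also have "\<dots> \<in> sets M"
  proof -
    have "?G \<in> sets M" by (rule good_meas[OF pi])
    moreover have "(\<Union>q\<in>\<rat> \<inter> {0..}. {w\<in>space M. arrival tau i w \<le> q \<and> q < arrival tau (Suc i) w} \<inter> (\<xi> q -` {n} \<inter> space M)) \<in> sets M"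
    proof (rule sets.countable_UN')
      show "countable (\<rat> \<inter> {0..})" using countable_rat by auto
      show "(\<lambda>q. {w\<in>space M. arrival tau i w \<le> q \<and> q < arrival tau (Suc i) w} \<inter> (\<xi> q -` {n} \<inter> space M)) ` (\<rat> \<inter> {0..}) \<subseteq> sets M"
      proof safe
        fix q :: real assume "q \<in> \<rat>" "0 \<le> q"
        have "{w\<in>space M. arrival tau i w \<le> q \<and> q < arrival tau (Suc i) w} \<in> sets M" by measurable
        moreover have "\<xi> q -` {n} \<inter> space M \<in> sets M" using m[OF \<open>0 \<le> q\<close>] by (simp add: measurable_count_space_eq2_countable)
        ultimately show "{w\<in>space M. arrival tau i w \<le> q \<and> q < arrival tau (Suc i) w} \<inter> (\<xi> q -` {n} \<inter> space M) \<in> sets M" by auto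
      qed
    qed
    ultimately show ?thesis by auto
  qed
  finally show "Xv tau \<xi> i -` {n} \<inter> space M \<in> sets M" .
qed auto

lemma Cn_meas:
  assumes pi: "poisson_interarrivals M lam tau" and T: "0 \<le> T"
    and p: "\<forall>w\<in>space M. pathok tau k \<xi> w"
    and m: "\<And>q. 0 \<le> q \<Longrightarrow> \<xi> q \<in> measurable M (count_space UNIV)"
  shows "Cn tau F T \<xi> \<in> borel_measurable M"
proof -
  note [measurable] = arrival_meas[OF pi]
  have X: "Xv tau \<xi> i \<in> measurable M (count_space UNIV)" for i by (rule Xv_meas[OF pi p m])
  have t: "(\<lambda>w. if 1 \<le> i \<and> arrival tau i w \<le> T
      then ennreal (F (real (Xv tau \<xi> (i - 1) w) - real (Xv tau \<xi> i w))) else 0) \<in> borel_measurable M" for i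
  proof (rule measurable_If)
    show "(\<lambda>w. ennreal (F (real (Xv tau \<xi> (i - 1) w) - real (Xv tau \<xi> i w)))) \<in> borel_measurable M"
      by (rule meas_nat2[OF X X]) auto
    show "{w \<in> space M. 1 \<le> i \<and> arrival tau i w \<le> T} \<in> sets M" by measurable
  qed auto
  have e: "(\<lambda>w. ennreal (F (real (\<xi> T w)))) \<in> borel_measurable M"
    using measurable_compose_countable[OF _ m[OF T], of "\<lambda>a w. ennreal (F (real a))" borel] by auto
  show ?thesis unfolding Cn_def[abs_def]
    using t e by measurable
qed




lemma AE_good:
  assumes pi: "poisson_interarrivals M lam tau"
  shows "AE w in M. \<forall>j. 0 < tau j w"
proof -
  have ps: "prob_space M" and l: "0 < lam" using pi unfolding poisson_interarrivals_def by auto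
  interpret prob_space M by (rule ps)
  have "AE w in M. 0 < tau j w" for j
  proof -
    note [measurable] = tau_meas[OF pi]
    have D: "distributed M lborel (tau j) (exponential_density lam)" using pi unfolding poisson_interarrivals_def by auto
    have "prob {w \<in> space M. tau j w \<le> 0} = 0"
      using exponential_distributedD_le[OF D order.refl l] by simp
    moreover have S: "{w \<in> space M. tau j w \<le> 0} \<in> sets M" by measurable
    ultimately have "{w \<in> space M. tau j w \<le> 0} \<in> null_sets M"
      by (simp add: emeasure_eq_measure null_sets_def)
    then show ?thesis by (rule AE_I') auto
  qed
  then show ?thesis by (simp add: AE_all_countable)
qed

lemma cost_Cn:
  assumes pi: "poisson_interarrivals M lam tau" and adm: "\<xi> \<in> admissible M tau k"
  shows "cost M tau F T \<xi> = (\<integral>\<^sup>+ w. Cn tau F T \<xi> w \<partial>M)"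
  unfolding cost_def
proof (rule nn_integral_cong_AE)
  show "AE w in M. (\<Sum>i. if 1 \<le> i \<and> arrival tau i w \<le> T
             then ennreal (F (left_lim (\<lambda>t. \<xi> t w) (arrival tau i w) - real (\<xi> (arrival tau i w) w)))
             else 0) + ennreal (F (real (\<xi> T w))) = Cn tau F T \<xi> w"
    using AE_good[OF pi] AE_space
  proof eventually_elim
    case (elim w)
    note True = elim(2)
    show ?case
    proof -
      have p: "pathok tau k \<xi> w" by (rule adm_pathok[OF adm True])
      have "(\<lambda>i. if 1 \<le> i \<and> arrival tau i w \<le> T
             then ennreal (F (left_lim (\<lambda>t. \<xi> t w) (arrival tau i w) - real (\<xi> (arrival tau i w) w)))
             else 0) = (\<lambda>i. if 1 \<le> i \<and> arrival tau i w \<le> T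
      then ennreal (F (real (Xv tau \<xi> (i - 1) w) - real (Xv tau \<xi> i w))) else 0)"
      proof
        fix i show "(if 1 \<le> i \<and> arrival tau i w \<le> T
             then ennreal (F (left_lim (\<lambda>t. \<xi> t w) (arrival tau i w) - real (\<xi> (arrival tau i w) w)))
             else 0) = (if 1 \<le> i \<and> arrival tau i w \<le> T
      then ennreal (F (real (Xv tau \<xi> (i - 1) w) - real (Xv tau \<xi> i w))) else 0)"
        proof (cases i)
          case 0 then show ?thesis by simp
        next
          case (Suc m)
          then show ?thesis using left_lim_arr[OF p elim(1), of m] elim by (simp add: Xv_def)
        qed
      qed
      then show ?thesis by (simp add: Cn_def)
    qed
  qed
qed




definition mn :: "(real \<Rightarrow> 'w \<Rightarrow> nat) \<Rightarrow> (real \<Rightarrow> 'w \<Rightarrow> nat) \<Rightarrow> nat \<Rightarrow> real \<Rightarrow> 'w \<Rightarrow> nat" where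
  "mn \<xi> \<eta> a t w = min (\<xi> t w) (\<eta> t w + a)"
definition mx :: "(real \<Rightarrow> 'w \<Rightarrow> nat) \<Rightarrow> (real \<Rightarrow> 'w \<Rightarrow> nat) \<Rightarrow> nat \<Rightarrow> real \<Rightarrow> 'w \<Rightarrow> nat" where
  "mx \<xi> \<eta> a t w = max (\<xi> t w) (\<eta> t w + a) - a"

lemma comb_adm:
  fixes h :: "nat \<Rightarrow> nat \<Rightarrow> nat"
  assumes x: "\<xi> \<in> admissible M tau k1" and e: "\<eta> \<in> admissible M tau k2"
    and hm: "\<And>u v u' v'. u' \<le> u \<Longrightarrow> v' \<le> v \<Longrightarrow> h u' v' \<le> h u v"
    and h0: "h k1 k2 = k"
  shows "(\<lambda>t w. h (\<xi> t w) (\<eta> t w)) \<in> admissible M tau k"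
proof -
  have m: "(\<lambda>w. h (\<xi> t w) (\<eta> t w)) \<in> measurable (nat_filtration M tau t) (count_space UNIV)" if "0 \<le> t" for t
    using meas_nat2[OF adm_meas[OF x that] adm_meas[OF e that], of h "count_space UNIV"]
    by simp
  show ?thesis unfolding admissible_def
  proof (intro CollectI conjI allI impI ballI)
    fix t :: real assume "0 \<le> t" then show "(\<lambda>w. h (\<xi> t w) (\<eta> t w)) \<in> measurable (nat_filtration M tau t) (count_space UNIV)"
      by (rule m)
  next
    fix w assume w: "w \<in> space M"
    show "h (\<xi> 0 w) (\<eta> 0 w) = k" using adm_pathok[OF x w] adm_pathok[OF e w] h0 by (simp add: pathok_def)
    fix s t :: real
    {
      assume st: "0 \<le> s \<and> s \<le> t"
      have "\<xi> t w \<le> \<xi> s w" "\<eta> t w \<le> \<eta> s w"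
        using adm_pathok[OF x w] adm_pathok[OF e w] st unfolding pathok_def by auto
      then show "h (\<xi> t w) (\<eta> t w) \<le> h (\<xi> s w) (\<eta> s w)" by (rule hm)
    }
    {
      assume st: "0 \<le> s \<and> s \<le> t \<and> (\<forall>i\<ge>1. \<not> (s < arrival tau i w \<and> arrival tau i w \<le> t))"
      have "\<xi> s w = \<xi> t w" "\<eta> s w = \<eta> t w"
        using adm_pathok[OF x w] adm_pathok[OF e w] st unfolding pathok_def by blast+
      then show "h (\<xi> s w) (\<eta> s w) = h (\<xi> t w) (\<eta> t w)" by simp
    }
  qed
qed

lemma mn_adm:
  assumes x: "\<xi> \<in> admissible M tau (Suc k)" and e: "\<eta> \<in> admissible M tau (k - a)" and a: "a \<le> k"
  shows "mn \<xi> \<eta> a \<in> admissible M tau k"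
  unfolding mn_def[abs_def]
  by (rule comb_adm[OF x e, of "\<lambda>u v. min u (v + a)"]) (use a in auto)

lemma mx_adm:
  assumes x: "\<xi> \<in> admissible M tau (Suc k)" and e: "\<eta> \<in> admissible M tau (k - a)" and a: "a \<le> k"
  shows "mx \<xi> \<eta> a \<in> admissible M tau (Suc k - a)"
  unfolding mx_def[abs_def]
  by (rule comb_adm[OF x e, of "\<lambda>u v. max u (v + a) - a"]) (use a in auto)




lemma jump_nat:
  assumes cv: "strictly_convex_on {0..} F" and Fn: "\<forall>x\<ge>0. F x \<ge> 0"
    and "x1 \<le> x0" "e1 \<le> (e0::nat)"
  shows "ennreal (F (real (min x0 (e0 + a)) - real (min x1 (e1 + a))))
       + ennreal (F (real (max x0 (e0 + a) - a) - real (max x1 (e1 + a) - a)))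
     \<le> ennreal (F (real x0 - real x1)) + ennreal (F (real e0 - real e1))"
proof -
  let ?X0 = "real x0" and ?X1 = "real x1" and ?Y0 = "real e0 + real a" and ?Y1 = "real e1 + real a"
  have J: "F (min ?X0 ?Y0 - min ?X1 ?Y1) + F (max ?X0 ?Y0 - max ?X1 ?Y1) \<le> F (?X0 - ?X1) + F (?Y0 - ?Y1)"
    using assms by (intro jump_ineq[OF cv]) auto
  have e1: "real (min x0 (e0 + a)) = min ?X0 ?Y0" "real (min x1 (e1 + a)) = min ?X1 ?Y1"
    by (auto simp: min_def)
  have e2: "real (max x0 (e0 + a) - a) - real (max x1 (e1 + a) - a) = max ?X0 ?Y0 - max ?X1 ?Y1"
    by (auto simp: max_def of_nat_diff)
  have nn: "0 \<le> min ?X0 ?Y0 - min ?X1 ?Y1" "0 \<le> max ?X0 ?Y0 - max ?X1 ?Y1" "0 \<le> ?X0 - ?X1" "0 \<le> ?Y0 - ?Y1"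
    using assms by (auto simp: min_def max_def)
  have "ennreal (F (min ?X0 ?Y0 - min ?X1 ?Y1)) + ennreal (F (max ?X0 ?Y0 - max ?X1 ?Y1))
      = ennreal (F (min ?X0 ?Y0 - min ?X1 ?Y1) + F (max ?X0 ?Y0 - max ?X1 ?Y1))"
    using nn Fn by (intro ennreal_plus[symmetric]) auto
  also have "\<dots> \<le> ennreal (F (?X0 - ?X1) + F (?Y0 - ?Y1))" using J by (rule ennreal_leI)
  also have "\<dots> = ennreal (F (?X0 - ?X1)) + ennreal (F (?Y0 - ?Y1))"
    using nn Fn by (intro ennreal_plus) auto
  finally show ?thesis unfolding e1 e2 by simp
qed

lemma term_nat:
  assumes cv: "strictly_convex_on {0..} F" and Fn: "\<forall>x\<ge>0. F x \<ge> 0"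
  shows "ennreal (F (real (min x (e + a)))) + ennreal (F (real (max x (e + a) - a)))
     \<le> ennreal (F (real x)) + ennreal (F (real (e::nat)))"
proof -
  have T: "F (min (real x) (real e + real a)) + F (max (real x) (real e + real a) - real a) \<le> F (real x) + F (real e + real a - real a)"
    by (intro term_ineq[OF cv]) auto
  have e1: "real (min x (e + a)) = min (real x) (real e + real a)" by (auto simp: min_def)
  have e2: "real (max x (e + a) - a) = max (real x) (real e + real a) - real a" by (auto simp: max_def of_nat_diff)
  have "ennreal (F (min (real x) (real e + real a))) + ennreal (F (max (real x) (real e + real a) - real a))
    = ennreal (F (min (real x) (real e + real a)) + F (max (real x) (real e + real a) - real a))"
    using Fn by (intro ennreal_plus[symmetric]) (auto simp: max_def)
  also have "\<dots> \<le> ennreal (F (real x) + F (real e))" using T by (intro ennreal_leI) simp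
  also have "\<dots> = ennreal (F (real x)) + ennreal (F (real e))" using Fn by (intro ennreal_plus) auto
  finally show ?thesis unfolding e1 e2 .
qed

lemma Xv_mono:
  assumes p: "pathok tau k \<xi> w" and g: "\<forall>j. 0 < tau j w"
  shows "Xv tau \<xi> (Suc m) w \<le> Xv tau \<xi> m w"
proof -
  have "0 \<le> arrival tau m w" "arrival tau m w \<le> arrival tau (Suc m) w"
    using g arr_nonneg[of tau w m] arr_mono[of tau w m "Suc m"] by auto
  then show ?thesis using p g unfolding pathok_def Xv_def by auto
qed

lemma Cn_ineq:
  assumes cv: "strictly_convex_on {0..} F" and Fn: "\<forall>x\<ge>0. F x \<ge> 0"
    and px: "pathok tau k1 \<xi> w" and pe: "pathok tau k2 \<eta> w" and g: "\<forall>j. 0 < tau j w"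
  shows "Cn tau F T (mn \<xi> \<eta> a) w + Cn tau F T (mx \<xi> \<eta> a) w \<le> Cn tau F T \<xi> w + Cn tau F T \<eta> w"
proof -
  define f where "f \<zeta> i = (if 1 \<le> i \<and> arrival tau i w \<le> T
      then ennreal (F (real (Xv tau \<zeta> (i - 1) w) - real (Xv tau \<zeta> i w))) else 0)" for \<zeta> i
  have Cn: "Cn tau F T \<zeta> w = suminf (f \<zeta>) + ennreal (F (real (\<zeta> T w)))" for \<zeta>
    unfolding Cn_def f_def[abs_def] by simp
  have Xmn: "Xv tau (mn \<xi> \<eta> a) i w = min (Xv tau \<xi> i w) (Xv tau \<eta> i w + a)" for i
    using g by (simp add: Xv_def mn_def)
  have Xmx: "Xv tau (mx \<xi> \<eta> a) i w = max (Xv tau \<xi> i w) (Xv tau \<eta> i w + a) - a" for i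
    using g by (simp add: Xv_def mx_def)
  have fi: "f (mn \<xi> \<eta> a) i + f (mx \<xi> \<eta> a) i \<le> f \<xi> i + f \<eta> i" for i
  proof (cases i)
    case 0 then show ?thesis by (simp add: f_def)
  next
    case (Suc m)
    have "ennreal (F (real (Xv tau (mn \<xi> \<eta> a) m w) - real (Xv tau (mn \<xi> \<eta> a) (Suc m) w)))
        + ennreal (F (real (Xv tau (mx \<xi> \<eta> a) m w) - real (Xv tau (mx \<xi> \<eta> a) (Suc m) w)))
      \<le> ennreal (F (real (Xv tau \<xi> m w) - real (Xv tau \<xi> (Suc m) w)))
        + ennreal (F (real (Xv tau \<eta> m w) - real (Xv tau \<eta> (Suc m) w)))"
      unfolding Xmn Xmx
      by (rule jump_nat[OF cv Fn Xv_mono[OF px g] Xv_mono[OF pe g]])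
    then show ?thesis using Suc by (simp add: f_def)
  qed
  have "suminf (f (mn \<xi> \<eta> a)) + suminf (f (mx \<xi> \<eta> a)) = (\<Sum>i. f (mn \<xi> \<eta> a) i + f (mx \<xi> \<eta> a) i)"
    by (simp add: suminf_add)
  also have "\<dots> \<le> (\<Sum>i. f \<xi> i + f \<eta> i)" using fi by (intro suminf_le) auto
  also have "\<dots> = suminf (f \<xi>) + suminf (f \<eta>)" by (simp add: suminf_add)
  finally have S: "suminf (f (mn \<xi> \<eta> a)) + suminf (f (mx \<xi> \<eta> a)) \<le> suminf (f \<xi>) + suminf (f \<eta>)" .
  have Tm: "ennreal (F (real (mn \<xi> \<eta> a T w))) + ennreal (F (real (mx \<xi> \<eta> a T w)))
     \<le> ennreal (F (real (\<xi> T w))) + ennreal (F (real (\<eta> T w)))"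
    unfolding mn_def mx_def by (rule term_nat[OF cv Fn])
  show ?thesis unfolding Cn using add_mono[OF S Tm] by (simp add: ac_simps)
qed




lemma Cn_meas_adm:
  assumes pi: "poisson_interarrivals M lam tau" and T: "0 \<le> T" and adm: "\<zeta> \<in> admissible M tau k"
  shows "Cn tau F T \<zeta> \<in> borel_measurable M"
proof (rule Cn_meas[OF pi T, of k])
  show "\<forall>w\<in>space M. pathok tau k \<zeta> w" using adm_pathok[OF adm] by auto
  fix q :: real assume q: "0 \<le> q"
  show "\<zeta> q \<in> measurable M (count_space UNIV)" by (rule filt_meas[OF pi adm_meas[OF adm q]])
qed

lemma cost_ineq:
  assumes pi: "poisson_interarrivals M lam tau" and T: "0 \<le> T"
    and cv: "strictly_convex_on {0..} F" and Fn: "\<forall>x\<ge>0. F x \<ge> 0"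
    and x: "\<xi> \<in> admissible M tau (Suc k)" and e: "\<eta> \<in> admissible M tau (k - a)" and a: "a \<le> k"
  shows "cost M tau F T (mn \<xi> \<eta> a) + cost M tau F T (mx \<xi> \<eta> a) \<le> cost M tau F T \<xi> + cost M tau F T \<eta>"
proof -
  have a1: "mn \<xi> \<eta> a \<in> admissible M tau k" by (rule mn_adm[OF x e a])
  have a2: "mx \<xi> \<eta> a \<in> admissible M tau (Suc k - a)" by (rule mx_adm[OF x e a])
  have "cost M tau F T (mn \<xi> \<eta> a) + cost M tau F T (mx \<xi> \<eta> a)
     = (\<integral>\<^sup>+ w. Cn tau F T (mn \<xi> \<eta> a) w + Cn tau F T (mx \<xi> \<eta> a) w \<partial>M)"
    unfolding cost_Cn[OF pi a1] cost_Cn[OF pi a2]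
    by (rule nn_integral_add[symmetric]) (rule Cn_meas_adm[OF pi T a1], rule Cn_meas_adm[OF pi T a2])
  also have "\<dots> \<le> (\<integral>\<^sup>+ w. Cn tau F T \<xi> w + Cn tau F T \<eta> w \<partial>M)"
  proof (rule nn_integral_mono_AE)
    show "AE w in M. Cn tau F T (mn \<xi> \<eta> a) w + Cn tau F T (mx \<xi> \<eta> a) w \<le> Cn tau F T \<xi> w + Cn tau F T \<eta> w"
      using AE_good[OF pi] AE_space
    proof eventually_elim
      case (elim w)
      show ?case by (rule Cn_ineq[OF cv Fn adm_pathok[OF x elim(2)] adm_pathok[OF e elim(2)] elim(1)])
    qed
  qed
  also have "\<dots> = cost M tau F T \<xi> + cost M tau F T \<eta>"
    unfolding cost_Cn[OF pi x] cost_Cn[OF pi e]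
    by (rule nn_integral_add) (rule Cn_meas_adm[OF pi T x], rule Cn_meas_adm[OF pi T e])
  finally show ?thesis .
qed

lemma const_adm: "(\<lambda>t w. k) \<in> admissible M tau k"
  unfolding admissible_def by auto

lemma left_lim_const[simp]: "left_lim (\<lambda>t. c) s = real c"
  unfolding left_lim_def by (intro tendsto_Lim) auto

lemma const_cost:
  assumes pi: "poisson_interarrivals M lam tau" and F0: "F 0 = 0"
  shows "cost M tau F T (\<lambda>t w. k) = ennreal (F (real k))"
proof -
  interpret prob_space M using pi unfolding poisson_interarrivals_def by auto
  show ?thesis unfolding cost_def by (simp add: F0 emeasure_space_1 cong: if_cong)
qed

lemma INF_add_c:
  fixes f :: "'a \<Rightarrow> ennreal"
  assumes "A \<noteq> {}"
  shows "(INF x\<in>A. f x + c) = (INF x\<in>A. f x) + c"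
  using continuous_at_Inf_mono[of "\<lambda>x. x + c" "f`A"]
  using continuous_add[of "at_right (Inf (f`A))" "\<lambda>x. x" "\<lambda>x. c"] assms
  by (auto simp: mono_def image_comp)

lemma INF_pair:
  fixes f g :: "'a \<Rightarrow> ennreal"
  assumes "A \<noteq> {}" "B \<noteq> {}" and H: "\<And>x y. x \<in> A \<Longrightarrow> y \<in> B \<Longrightarrow> L \<le> f x + g y"
  shows "L \<le> (INF x\<in>A. f x) + (INF y\<in>B. g y)"
proof -
  have "L \<le> (INF x\<in>A. f x) + g y" if "y \<in> B" for y
    using H that by (auto simp: INF_add_c[OF assms(1), symmetric] intro: INF_greatest)
  then have "L \<le> (INF y\<in>B. (INF x\<in>A. f x) + g y)" by (auto intro: INF_greatest)
  also have "\<dots> = (INF x\<in>A. f x) + (INF y\<in>B. g y)"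
    using INF_add_c[OF assms(2), of g "INF x\<in>A. f x"] by (simp add: ac_simps)
  finally show ?thesis .
qed

definition VV where "VV M tau F T k = (INF \<xi>\<in>admissible M tau k. cost M tau F T \<xi>)"

lemma VV_fin:
  assumes pi: "poisson_interarrivals M lam tau" and F0: "F 0 = 0"
  shows "VV M tau F T k \<le> ennreal (F (real k))"
  unfolding VV_def using const_cost[where F=F, OF pi F0, of T k, symmetric] const_adm[of k M tau]
  by (metis INF_lower)

lemma VV_ineq:
  assumes pi: "poisson_interarrivals M lam tau" and T: "0 \<le> T"
    and cv: "strictly_convex_on {0..} F" and Fn: "\<forall>x\<ge>0. F x \<ge> 0" and a: "a \<le> k"
  shows "VV M tau F T k + VV M tau F T (Suc k - a) \<le> VV M tau F T (Suc k) + VV M tau F T (k - a)"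
  unfolding VV_def
proof (rule INF_pair)
  show "admissible M tau (Suc k) \<noteq> {}" "admissible M tau (k - a) \<noteq> {}" using const_adm by blast+
  fix \<xi> \<eta> assume x: "\<xi> \<in> admissible M tau (Suc k)" and e: "\<eta> \<in> admissible M tau (k - a)"
  have "(INF \<xi>\<in>admissible M tau k. cost M tau F T \<xi>) + (INF \<xi>\<in>admissible M tau (Suc k - a). cost M tau F T \<xi>)
     \<le> cost M tau F T (mn \<xi> \<eta> a) + cost M tau F T (mx \<xi> \<eta> a)"
    by (intro add_mono INF_lower mn_adm[OF x e a] mx_adm[OF x e a])
  also have "\<dots> \<le> cost M tau F T \<xi> + cost M tau F T \<eta>" by (rule cost_ineq[OF pi T cv Fn x e a])
  finally show "(INF \<xi>\<in>admissible M tau k. cost M tau F T \<xi>) + (INF \<xi>\<in>admissible M tau (Suc k - a). cost M tau F T \<xi>)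
     \<le> cost M tau F T \<xi> + cost M tau F T \<eta>" .
qed

lemma value_ineq:
  assumes pi: "poisson_interarrivals M lam tau" and T: "0 \<le> T" and F0: "F 0 = 0"
    and cv: "strictly_convex_on {0..} F" and Fn: "\<forall>x\<ge>0. F x \<ge> 0" and a: "a \<le> k"
  shows "value_fn M tau F k T + value_fn M tau F (Suc k - a) T \<le> value_fn M tau F (Suc k) T + value_fn M tau F (k - a) T"
proof -
  have fin: "VV M tau F T j < \<top>" for j using VV_fin[where F=F, OF pi F0, of T j]
    by (simp add: order_le_less_trans)
  have v: "value_fn M tau F j T = enn2real (VV M tau F T j)" for j by (simp add: value_fn_def VV_def)
  have "enn2real (VV M tau F T k + VV M tau F T (Suc k - a)) \<le> enn2real (VV M tau F T (Suc k) + VV M tau F T (k - a))"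
    using VV_ineq[OF pi T cv Fn a] fin by (intro enn2real_mono) auto
  then show ?thesis unfolding v using fin by (simp add: enn2real_plus)
qed




theorem lemma2p9:
  fixes M :: "'w measure" and lam :: real and tau :: "nat \<Rightarrow> 'w \<Rightarrow> real"
    and F :: "real \<Rightarrow> real" and T :: real
  assumes "poisson_interarrivals M lam tau"
    and "\<forall>x\<ge>0. F x \<ge> 0"
    and "strict_mono_on {0..} F"
    and "strictly_convex_on {0..} F"
    and "F 0 = 0"
    and "T \<ge> 0"
  shows "mono (\<lambda>k. G_fn M tau F k T)"
proof (rule mono_iff_le_Suc[THEN iffD2], intro allI)
  fix k :: nat
  define v where "v j = value_fn M tau F j T" for j
  define W where "W j = Min ((\<lambda>a. v (j - a) + F (real a)) ` {0..j})" for j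
  have G: "G_fn M tau F j T = v j - W j" for j by (simp add: G_fn_def v_def W_def)
  have "W k \<in> (\<lambda>a. v (k - a) + F (real a)) ` {0..k}" unfolding W_def by (intro Min_in) auto
  then obtain a0 where a0: "a0 \<le> k" "W k = v (k - a0) + F (real a0)" by auto
  have "W (Suc k) \<le> v (Suc k - a0) + F (real a0)" unfolding W_def using a0 by (intro Min_le) auto
  moreover have "v k + v (Suc k - a0) \<le> v (Suc k) + v (k - a0)"
    unfolding v_def using value_ineq[where F=F, OF assms(1) assms(6) assms(5) assms(4) assms(2) a0(1)] by simp
  ultimately show "G_fn M tau F k T \<le> G_fn M tau F (Suc k) T" unfolding G using a0 by linarith
qed


end
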